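(* Let $X$ be a prelength space, $Y$ a metric space, and $f:X\to Y$ uniformly continuous with modulus $\mu_f$. For every $x\in\mathfrak{C}(X)$, the function $\mathrm{map}(f)(x)=f\circ x\circ\mu_f$, i.e. $\lambda\varepsilon.\,f(x(\mu_f(\varepsilon)))$, is a regular function over $Y$.
   Context: $\mathbb{Q}^+$ denotes the strictly positive rationals; all $\varepsilon,\delta$ (with indices) range over $\mathbb{Q}^+$. A metric space is a triple $(X,\asymp,B)$ where $\asymp$ is an equivalence relation on $X$ and $B$ assigns to each $\varepsilon\in\mathbb{Q}^+$ a binary relation $B_\varepsilon$ on $X$ respecting $\asymp$, such that: (1) each $B_\varepsilon$ is reflexive; (2) each $B_\varepsilon$ is symmetric; (3) if $B_{\varepsilon_1}(a,b)$ and $B_{\varepsilon_2}(b,c)$ then $B_{\varepsilon_1+\varepsilon_2}(a,c)$; (4) if $B_{\varepsilon+\delta}(a,b)$ for all $\delta$, then $B_\varepsilon(a,b)$; (5) if $B_\varepsilon(a,b)$ for all $\varepsilon$, then $a\asymp b$. A prelength space is a metric space such that for all $a,b,\varepsilon,\delta_1,\delta_2$ with $\varepsilon<\delta_1+\delta_2$ and $B_\varepsilon(a,b)$ there exists $c$ with $B_{\delta_1}(a,c)$ and $B_{\delta_2}(c,b)$. A regular function over $X$ is a function $x:\mathbb{Q}^+\to X$ such that $B_{\varepsilon_1+\varepsilon_2}(x(\varepsilon_1),x(\varepsilon_2))$ for all $\varepsilon_1,\varepsilon_2$; $\mathfrak{C}(X)$ denotes the set of regular functions over $X$. A function $f:X\to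 Y$ between metric spaces is uniformly continuous with modulus $\mu:\mathbb{Q}^+\to\mathbb{Q}^+$ if for all $\varepsilon,x_1,x_2$, $B^X_{\mu(\varepsilon)}(x_1,x_2)$ implies $B^Y_\varepsilon(f(x_1),f(x_2))$. *)

theory Defs
  imports Main "HOL.Rat"
begin

text \<open>A metric space in the sense of the paper: the carrier is the whole type 'a,
  eq is the equivalence relation, B e is the ball relation for e a positive rational.\<close>

definition metric_space_ax :: "('a \<Rightarrow> 'a \<Rightarrow> bool) \<Rightarrow> (rat \<Rightarrow> 'a \<Rightarrow> 'a \<Rightarrow> bool) \<Rightarrow> bool" where
  "metric_space_ax eq B \<longleftrightarrow>
     equivp eq \<and>
     (\<forall>e a a' b b'. 0 < e \<longrightarrow> eq a a' \<longrightarrow> eq b b' \<longrightarrow> (B e a b \<longleftrightarrow> B e a' b')) \<and>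
     (\<forall>e a. 0 < e \<longrightarrow> B e a a) \<and>
     (\<forall>e a b. 0 < e \<longrightarrow> B e a b \<longrightarrow> B e b a) \<and>
     (\<forall>e1 e2 a b c. 0 < e1 \<longrightarrow> 0 < e2 \<longrightarrow> B e1 a b \<longrightarrow> B e2 b c \<longrightarrow> B (e1 + e2) a c) \<and>
     (\<forall>e a b. 0 < e \<longrightarrow> (\<forall>d. 0 < d \<longrightarrow> B (e + d) a b) \<longrightarrow> B e a b) \<and>
     (\<forall>a b. (\<forall>e. 0 < e \<longrightarrow> B e a b) \<longrightarrow> eq a b)"

definition prelength_space :: "('a \<Rightarrow> 'a \<Rightarrow> bool) \<Rightarrow> (rat \<Rightarrow> 'a \<Rightarrow> 'a \<Rightarrow> bool) \<Rightarrow> bool" where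
  "prelength_space eq B \<longleftrightarrow> metric_space_ax eq B \<and>
     (\<forall>a b e d1 d2. 0 < e \<longrightarrow> 0 < d1 \<longrightarrow> 0 < d2 \<longrightarrow> e < d1 + d2 \<longrightarrow> B e a b \<longrightarrow>
        (\<exists>c. B d1 a c \<and> B d2 c b))"

text \<open>Regular functions: x is only meaningful on positive rationals.\<close>
definition regular_fun :: "(rat \<Rightarrow> 'a \<Rightarrow> 'a \<Rightarrow> bool) \<Rightarrow> (rat \<Rightarrow> 'a) \<Rightarrow> bool" where
  "regular_fun B x \<longleftrightarrow> (\<forall>e1 e2. 0 < e1 \<longrightarrow> 0 < e2 \<longrightarrow> B (e1 + e2) (x e1) (x e2))"

definition unif_cont_mod :: "(rat \<Rightarrow> 'a \<Rightarrow> 'a \<Rightarrow> bool) \<Rightarrow> (rat \<Rightarrow> 'b \<Rightarrow> 'b \<Rightarrow> bool) \<Rightarrow> ('a \<Rightarrow> 'b) \<Rightarrow> (rat \<Rightarrow> rat) \<Rightarrow> bool" where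
  "unif_cont_mod BX BY f mu \<longleftrightarrow> (\<forall>e. 0 < e \<longrightarrow> 0 < mu e) \<and>
     (\<forall>e x1 x2. 0 < e \<longrightarrow> BX (mu e) x1 x2 \<longrightarrow> BY e (f x1) (f x2))"

end

theory Submission
  imports Defs
begin

theorem theorem16:
  fixes eqX :: "'a \<Rightarrow> 'a \<Rightarrow> bool" and BX :: "rat \<Rightarrow> 'a \<Rightarrow> 'a \<Rightarrow> bool"
    and eqY :: "'b \<Rightarrow> 'b \<Rightarrow> bool" and BY :: "rat \<Rightarrow> 'b \<Rightarrow> 'b \<Rightarrow> bool"
    and f :: "'a \<Rightarrow> 'b" and mu :: "rat \<Rightarrow> rat" and x :: "rat \<Rightarrow> 'a"
  assumes "prelength_space eqX BX"
    and "metric_space_ax eqY BY"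
    and "unif_cont_mod BX BY f mu"
    and "regular_fun BX x"
  shows "regular_fun BY (\<lambda>e. f (x (mu e)))"
  unfolding regular_fun_def
proof (intro allI impI)
  fix e1 e2 :: rat assume e1: "0 < e1" and e2: "0 < e2"
  have pl: "\<And>a b e d1 d2. 0 < e \<Longrightarrow> 0 < d1 \<Longrightarrow> 0 < d2 \<Longrightarrow> e < d1 + d2 \<Longrightarrow> BX e a b \<Longrightarrow>
        (\<exists>c. BX d1 a c \<and> BX d2 c b)"
    using assms(1) unfolding prelength_space_def by blast
  have mupos: "\<And>e. 0 < e \<Longrightarrow> 0 < mu e" and uc: "\<And>e x1 x2. 0 < e \<Longrightarrow> BX (mu e) x1 x2 \<Longrightarrow> BY e (f x1) (f x2)"
    using assms(3) unfolding unif_cont_mod_def by blast+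
  have tri: "\<And>e1 e2 a b c. 0 < e1 \<Longrightarrow> 0 < e2 \<Longrightarrow> BY e1 a b \<Longrightarrow> BY e2 b c \<Longrightarrow> BY (e1 + e2) a c"
    and cl: "\<And>e a b. 0 < e \<Longrightarrow> (\<forall>d. 0 < d \<longrightarrow> BY (e + d) a b) \<Longrightarrow> BY e a b"
    using assms(2) unfolding metric_space_ax_def by blast+
  have reg: "BX (mu e1 + mu e2) (x (mu e1)) (x (mu e2))"
    using assms(4) mupos e1 e2 unfolding regular_fun_def by blast
  show "BY (e1 + e2) (f (x (mu e1))) (f (x (mu e2)))"
  proof (rule cl)
    show "0 < e1 + e2" using e1 e2 by simp
    show "\<forall>d>0. BY (e1 + e2 + d) (f (x (mu e1))) (f (x (mu e2)))"
    proof (intro allI impI)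
      fix d :: rat assume d: "0 < d"
      have m1: "0 < mu e1" "0 < mu e2" "0 < mu d" using mupos e1 e2 d by auto
      obtain c1 where c1: "BX (mu e1) (x (mu e1)) c1" "BX (mu e2 + mu d / 2) c1 (x (mu e2))"
        using pl[OF _ _ _ _ reg, of "mu e1" "mu e2 + mu d / 2"] m1 by auto
      obtain c2 where c2: "BX (mu d) c1 c2" "BX (mu e2) c2 (x (mu e2))"
        using pl[OF _ _ _ _ c1(2), of "mu d" "mu e2"] m1 by auto
      have "BY e1 (f (x (mu e1))) (f c1)" using uc e1 c1(1) by blast
      moreover have "BY d (f c1) (f c2)" using uc d c2(1) by blast
      moreover have "BY e2 (f c2) (f (x (mu e2)))" using uc e2 c2(2) by blast
      ultimately have "BY (e1 + d + e2) (f (x (mu e1))) (f (x (mu e2)))"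
        using tri e1 e2 d by (meson add_pos_pos)
      then show "BY (e1 + e2 + d) (f (x (mu e1))) (f (x (mu e2)))"
        by (simp add: algebra_simps)
    qed
  qed
qed

end
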